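(* For the GND game induced by the Shapley cost sharing mechanism, the function $$\Phi(p)=\sum_{e\in p}\sum_{i\in S_e} f_{i,e}\big(S_e^i(\psi_e)\cup\{i\}\big)$$ (where $S_e=\{i: e\in p_i\}$, $\psi_e$ is an arbitrary permutation of $S_e$, $S_e^i(\psi_e)$ is the set of players preceding $i$ in $\psi_e$, and $e \in p$ means $e\in\bigcup_i p_i$) satisfies $$\frac{1}{\lceil\max_j\alpha_j\rceil}\cdot C(p)\le\Phi(p)\le\mathcal{H}_N\cdot C(p)$$ for every strategy profile $p$, where $\mathcal{H}_N=\sum_{k=1}^N 1/k$.
   Context: GND instance: finite resource set $E$; players $i \in [N]$ with strategy collections $P_i \subseteq 2^E$ and weight vectors $w_i \in \mathbb{Z}_{\geq 1}^E$; constants $q\in\mathbb{Z}_{\ge1}$, $\alpha_1,\dots,\alpha_q > 1$; for each $e$, $\sigma_e \geq 0$, $\xi_{e,j} \geq 0$ (at least one positive), and $F_e(0)=0$, $F_e(l)=\sigma_e+\sum_j \xi_{e,j} l^{\alpha_j}$ for $l>0$. Profile $p=(p_1,\dots,p_N)$, $p_i\in P_i$; load $l_e^p=\sum_{i: e\in p_i} w_i(e)$; total cost $C(p)=\sum_e F_e(l_e^p)$. The Shapley cost share of $i\in X$ on $e$ when $X$ is the set of users of $e$ is $f_{i,e}(X)=\mathbb{E}\big[F_e\big(\sum_{i'\in X^i(\pi)}w_{i'}(e)+w_i(e)\big)-F_e\big(\sum_{i'\in X^i(\pi)}w_{i'}(e)\big)\big]$, where $\pi$ is a uniformly random permutation of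 $X$ and $X^i(\pi)$ is the set of players preceding $i$ in $\pi$. *)

theory Defs
  imports Complex_Main "HOL-Combinatorics.Multiset_Permutations"
begin

text \<open>Cost function F_e: F_e(0) = 0, F_e(l) = sigma_e + sum_{j<q} xi_{e,j} l^{alpha_j} for l > 0.
  The exponents are indexed by j in {0..<q} (instead of 1..q).\<close>
definition gnd_cost ::
  "('e \<Rightarrow> real) \<Rightarrow> ('e \<Rightarrow> nat \<Rightarrow> real) \<Rightarrow> (nat \<Rightarrow> real) \<Rightarrow> nat \<Rightarrow> 'e \<Rightarrow> nat \<Rightarrow> real" where
  "gnd_cost sigma xi alpha q e l =
     (if l = 0 then 0 else sigma e + (\<Sum>j<q. xi e j * (real l) powr (alpha j)))"

definition preceding :: "nat list \<Rightarrow> nat \<Rightarrow> nat set" where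
  "preceding ord i = set (takeWhile (\<lambda>x. x \<noteq> i) ord)"

definition wsum :: "(nat \<Rightarrow> 'e \<Rightarrow> nat) \<Rightarrow> 'e \<Rightarrow> nat set \<Rightarrow> nat" where
  "wsum w e X = (\<Sum>i\<in>X. w i e)"

definition shapley ::
  "('e \<Rightarrow> nat \<Rightarrow> real) \<Rightarrow> (nat \<Rightarrow> 'e \<Rightarrow> nat) \<Rightarrow> 'e \<Rightarrow> nat set \<Rightarrow> nat \<Rightarrow> real" where
  "shapley F w e X i =
     (\<Sum>ord\<in>permutations_of_set X.
        F e (wsum w e (preceding ord i) + w i e) - F e (wsum w e (preceding ord i)))
     / real (card (permutations_of_set X))"

definition users :: "nat \<Rightarrow> (nat \<Rightarrow> 'e set) \<Rightarrow> 'e \<Rightarrow> nat set" where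
  "users N p e = {i. i < N \<and> e \<in> p i}"

definition load :: "nat \<Rightarrow> (nat \<Rightarrow> 'e \<Rightarrow> nat) \<Rightarrow> (nat \<Rightarrow> 'e set) \<Rightarrow> 'e \<Rightarrow> nat" where
  "load N w p e = wsum w e (users N p e)"

definition total_cost ::
  "nat \<Rightarrow> 'e set \<Rightarrow> ('e \<Rightarrow> nat \<Rightarrow> real) \<Rightarrow> (nat \<Rightarrow> 'e \<Rightarrow> nat) \<Rightarrow> (nat \<Rightarrow> 'e set) \<Rightarrow> real" where
  "total_cost N E F w p = (\<Sum>e\<in>E. F e (load N w p e))"

definition potential ::
  "nat \<Rightarrow> ('e \<Rightarrow> nat \<Rightarrow> real) \<Rightarrow> (nat \<Rightarrow> 'e \<Rightarrow> nat) \<Rightarrow> (nat \<Rightarrow> 'e set) \<Rightarrow> ('e \<Rightarrow> nat list) \<Rightarrow> real" where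
  "potential N F w p psi =
     (\<Sum>e\<in>(\<Union>i<N. p i). \<Sum>i\<in>users N p e.
        shapley F w e (preceding (psi e) i \<union> {i}) i)"

end

theory Submission
  imports Defs
begin

lemma tw_split: "i \<notin> set ys \<Longrightarrow> takeWhile (\<lambda>x. x \<noteq> i) (ys @ i # zs) = ys"
  by (induct ys) auto

lemma fiber_eq:
  assumes fin: "finite X" and iX: "i \<in> X" and TX: "T \<subseteq> X - {i}"
  shows "{ord \<in> permutations_of_set X. preceding ord i = T}
       = (\<lambda>(xs,ys). xs @ i # ys) ` (permutations_of_set T \<times> permutations_of_set (X - T - {i}))"
proof (rule set_eqI, rule iffI)
  fix ord assume "ord \<in> {ord \<in> permutations_of_set X. preceding ord i = T}"
  then have o: "set ord = X" "distinct ord" "set (takeWhile (\<lambda>x. x \<noteq> i) ord) = T"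
    by (auto simp: permutations_of_set_def preceding_def)
  obtain ys zs where yz: "ord = ys @ i # zs" "i \<notin> set ys"
    using split_list_first[of i ord] o iX by auto
  have tw: "takeWhile (\<lambda>x. x \<noteq> i) ord = ys" using yz by (simp add: tw_split)
  have "set ys = T" using o tw by simp
  moreover have d: "distinct ys" "distinct zs" "set ys \<inter> set zs = {}" "i \<notin> set zs"
    using o(2) yz(1) by auto
  moreover have "set zs = X - T - {i}"
  proof -
    have "X = set ys \<union> {i} \<union> set zs" using o(1) yz(1) by auto
    then show ?thesis using d \<open>set ys = T\<close> by blast
  qed
  ultimately have "(ys, zs) \<in> permutations_of_set T \<times> permutations_of_set (X - T - {i})"
    by (simp add: permutations_of_set_def)
  then show "ord \<in> (\<lambda>(xs,ys). xs @ i # ys) ` (permutations_of_set T \<times> permutations_of_set (X - T - {i}))"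
    using yz(1) by (intro image_eqI[where x="(ys,zs)"]) auto
next
  fix ord assume "ord \<in> (\<lambda>(xs,ys). xs @ i # ys) ` (permutations_of_set T \<times> permutations_of_set (X - T - {i}))"
  then obtain ys zs where o: "ord = ys @ i # zs" "set ys = T" "distinct ys" "set zs = X - T - {i}" "distinct zs"
    by (auto simp: permutations_of_set_def)
  have iT: "i \<notin> T" using TX by auto
  have tw: "takeWhile (\<lambda>x. x \<noteq> i) ord = ys" using o iT TX by (simp add: tw_split)
  have "set ord = X" using o iT TX iX by auto
  moreover have "distinct ord" using o iT by auto
  moreover have "preceding ord i = T" using tw o by (simp add: preceding_def)
  ultimately show "ord \<in> {ord \<in> permutations_of_set X. preceding ord i = T}"
    by (simp add: permutations_of_set_def)
qed

lemma fiber_card: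
  assumes fin: "finite X" and iX: "i \<in> X" and TX: "T \<subseteq> X - {i}"
  shows "card {ord \<in> permutations_of_set X. preceding ord i = T}
       = fact (card T) * fact (card X - 1 - card T)"
proof -
  have inj: "inj_on (\<lambda>(xs,ys). xs @ i # ys) (permutations_of_set T \<times> permutations_of_set (X - T - {i}))"
  proof (rule inj_onI)
    fix a b assume a: "a \<in> permutations_of_set T \<times> permutations_of_set (X - T - {i})"
      and b: "b \<in> permutations_of_set T \<times> permutations_of_set (X - T - {i})"
      and eq: "(\<lambda>(xs,ys). xs @ i # ys) a = (\<lambda>(xs,ys). xs @ i # ys) b"
    obtain a1 a2 b1 b2 where ab: "a = (a1,a2)" "b = (b1,b2)" by (cases a, cases b)
    have "i \<notin> set a1" "i \<notin> set a2" using a ab TX by (auto simp: permutations_of_set_def)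
    then show "a = b" using eq ab append_Cons_eq_iff[of i a1 a2 b1 b2] by auto
  qed
  have fT: "finite T" using fin TX finite_subset by blast
  have c: "card (X - T - {i}) = card X - 1 - card T"
  proof -
    have "X - T - {i} = X - insert i T" by auto
    moreover have "card (X - insert i T) = card X - card (insert i T)"
      using TX iX fin by (intro card_Diff_subset) (auto intro: finite_subset)
    moreover have "card (insert i T) = Suc (card T)" using TX fT by (subst card_insert_disjoint) auto
    ultimately show ?thesis by simp
  qed
  show ?thesis
    unfolding fiber_eq[OF assms] card_image[OF inj] card_cartesian_product
    using fin fT c by simp
qed

lemma sum_perm_preceding:
  assumes fin: "finite X" and iX: "i \<in> X"
  shows "(\<Sum>ord\<in>permutations_of_set X. h (preceding ord i))
       = (\<Sum>T\<in>Pow (X - {i}). real (fact (card T) * fact (card X - 1 - card T)) * h T)"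
proof -
  have img: "(\<lambda>ord. preceding ord i) ` permutations_of_set X \<subseteq> Pow (X - {i})"
  proof
    fix T assume "T \<in> (\<lambda>ord. preceding ord i) ` permutations_of_set X"
    then obtain ord where o: "ord \<in> permutations_of_set X" "T = preceding ord i" by auto
    show "T \<in> Pow (X - {i})" using o
      by (auto dest: set_takeWhileD simp: preceding_def permutations_of_set_def)
  qed
  have "(\<Sum>ord\<in>permutations_of_set X. h (preceding ord i))
      = (\<Sum>T\<in>Pow (X - {i}). \<Sum>ord\<in>{ord \<in> permutations_of_set X. preceding ord i = T}. h (preceding ord i))"
    by (rule sum.group[symmetric]) (use fin img in auto)
  also have "\<dots> = (\<Sum>T\<in>Pow (X - {i}). \<Sum>ord\<in>{ord \<in> permutations_of_set X. preceding ord i = T}. h T)"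
    by (intro sum.cong) auto
  also have "\<dots> = (\<Sum>T\<in>Pow (X - {i}). real (fact (card T) * fact (card X - 1 - card T)) * h T)"
    by (intro sum.cong refl) (simp add: fiber_card[OF fin iX] del: of_nat_mult)
  finally show ?thesis .
qed

definition cf :: "nat \<Rightarrow> nat \<Rightarrow> real" where
  "cf t n = (if t = 0 then 0 else fact (t - 1) * fact (n - t) / fact n)"

definition Pot :: "(nat set \<Rightarrow> real) \<Rightarrow> nat set \<Rightarrow> real" where
  "Pot G X = (\<Sum>T\<in>Pow X. cf (card T) (card X) * G T)"

lemma cf_Suc: "t \<le> m \<Longrightarrow> cf (Suc t) (Suc m) = fact t * fact (m - t) / fact (Suc m)"
  by (simp add: cf_def)

lemma aux_alg:
  fixes a b d g s r M :: real
  assumes "d > 0" "M = s + r + 2" "s \<ge> 0" "r \<ge> 0"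
  shows "a * ((r + 1) * b) / (M * d) * g - a * b / d * g = - ((s + 1) * a * b / (M * d)) * g"
proof -
  have "M > 0" using assms by simp
  then show ?thesis using assms(1) by (simp add: field_simps) (simp add: assms(2) algebra_simps)
qed

lemma cf_diff: assumes "t \<le> m" "t = 0 \<Longrightarrow> g = 0"
  shows "cf t (Suc m) * g - cf t m * g = - (fact t * fact (m - t) / fact (Suc m)) * g"
proof (cases t)
  case 0 then show ?thesis using assms by simp
next
  case (Suc s)
  obtain r where r: "m = Suc s + r" using assms(1) Suc le_Suc_ex by blast
  have d1: "Suc m - t = Suc r" "m - t = r" "t - 1 = s" using r Suc by auto
  have f1: "(fact (Suc r) :: real) = Suc r * fact r" "(fact (Suc m) :: real) = Suc m * fact m"
    "(fact t :: real) = Suc s * fact s" using Suc by (simp_all only: fact_Suc of_nat_mult of_nat_fact)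
  have e1: "cf t (Suc m) = fact s * ((real r + 1) * fact r) / (real (Suc m) * fact m)"
    using Suc unfolding cf_def d1 f1 by (simp add: algebra_simps)
  have e2: "cf t m = fact s * fact r / fact m" using Suc unfolding cf_def d1 by simp
  have e3: "fact t * fact (m - t) / fact (Suc m) = (real s + 1) * fact s * fact r / (real (Suc m) * fact m)"
    unfolding d1 f1 by (simp add: algebra_simps)
  have pos: "(fact m :: real) > 0" by simp
  have rr: "real (Suc m) = real s + real r + 2" using r by simp
  show ?thesis unfolding e1 e2 e3 by (rule aux_alg[OF pos rr]) simp_all
qed

lemma pot_diff:
  assumes fin: "finite X" and iX: "i \<in> X" and G0: "G {} = 0"
  shows "Pot G X - Pot G (X - {i})
       = (\<Sum>T\<in>Pow (X - {i}). fact (card T) * fact (card X - 1 - card T) / fact (card X) * (G (insert i T) - G T))"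
proof -
  define Y where "Y = X - {i}"
  define m where "m = card Y"
  have fY: "finite Y" using fin Y_def by simp
  have XY: "X = insert i Y" and iY: "i \<notin> Y" using iX Y_def by auto
  have cX: "card X = Suc m" using XY iY fY m_def by simp
  have fin_sub: "\<And>T. T \<in> Pow Y \<Longrightarrow> finite T" using fY finite_subset by auto
  have cardle: "\<And>T. T \<in> Pow Y \<Longrightarrow> card T \<le> m" using fY m_def card_mono by auto
  have disj: "Pow Y \<inter> insert i ` Pow Y = {}" using iY by auto
  have inj: "inj_on (insert i) (Pow Y)" using iY by (auto simp: inj_on_def)
  have "Pot G X = (\<Sum>T\<in>Pow Y. cf (card T) (Suc m) * G T) + (\<Sum>T\<in>insert i ` Pow Y. cf (card T) (Suc m) * G T)"
    unfolding Pot_def cX unfolding XY Pow_insert using fY disj by (intro sum.union_disjoint) auto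
  also have "(\<Sum>T\<in>insert i ` Pow Y. cf (card T) (Suc m) * G T)
      = (\<Sum>T\<in>Pow Y. cf (Suc (card T)) (Suc m) * G (insert i T))"
    unfolding sum.reindex[OF inj] o_def
  proof (intro sum.cong refl)
    fix T assume T: "T \<in> Pow Y"
    have "i \<notin> T" using T iY by auto
    then have "card (insert i T) = Suc (card T)" using fin_sub[OF T] by simp
    then show "cf (card (insert i T)) (Suc m) * G (insert i T) = cf (Suc (card T)) (Suc m) * G (insert i T)" by simp
  qed
  also have "\<dots> = (\<Sum>T\<in>Pow Y. fact (card T) * fact (m - card T) / fact (Suc m) * G (insert i T))"
    by (intro sum.cong refl) (simp add: cf_Suc cardle)
  finally have PX: "Pot G X = (\<Sum>T\<in>Pow Y. cf (card T) (Suc m) * G T)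
        + (\<Sum>T\<in>Pow Y. fact (card T) * fact (m - card T) / fact (Suc m) * G (insert i T))" .
  have PY: "Pot G Y = (\<Sum>T\<in>Pow Y. cf (card T) m * G T)" unfolding Pot_def m_def ..
  have "(\<Sum>T\<in>Pow Y. cf (card T) (Suc m) * G T) - (\<Sum>T\<in>Pow Y. cf (card T) m * G T)
      = (\<Sum>T\<in>Pow Y. - (fact (card T) * fact (m - card T) / fact (Suc m)) * G T)"
    unfolding sum_subtractf[symmetric]
  proof (intro sum.cong refl)
    fix T assume T: "T \<in> Pow Y"
    have "card T = 0 \<Longrightarrow> G T = 0" using fin_sub[OF T] G0 by simp
    then show "cf (card T) (Suc m) * G T - cf (card T) m * G T = - (fact (card T) * fact (m - card T) / fact (Suc m)) * G T"
      by (rule cf_diff[OF cardle[OF T]])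
  qed
  then have "Pot G X - Pot G Y = (\<Sum>T\<in>Pow Y. fact (card T) * fact (m - card T) / fact (Suc m) * G (insert i T))
      + (\<Sum>T\<in>Pow Y. - (fact (card T) * fact (m - card T) / fact (Suc m)) * G T)"
    unfolding PX PY by simp
  also have "\<dots> = (\<Sum>T\<in>Pow Y. fact (card T) * fact (m - card T) / fact (Suc m) * (G (insert i T) - G T))"
    unfolding sum.distrib[symmetric] by (intro sum.cong refl) (simp add: right_diff_distrib)
  finally show ?thesis unfolding Y_def[symmetric] cX by (simp add: m_def)
qed

lemma i_notin_preceding: "i \<notin> preceding ord i"
  by (auto simp: preceding_def dest: set_takeWhileD)

lemma shapley_pot:
  assumes fin: "finite X" and iX: "i \<in> X" and F0: "F e 0 = 0"
  shows "shapley F w e X i = Pot (\<lambda>T. F e (wsum w e T)) X - Pot (\<lambda>T. F e (wsum w e T)) (X - {i})"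
proof -
  define G where "G = (\<lambda>T. F e (wsum w e T))"
  have G0: "G {} = 0" using F0 by (simp add: G_def wsum_def)
  have "(\<Sum>ord\<in>permutations_of_set X.
        F e (wsum w e (preceding ord i) + w i e) - F e (wsum w e (preceding ord i)))
      = (\<Sum>T\<in>Pow (X - {i}). real (fact (card T) * fact (card X - 1 - card T)) *
           (F e (wsum w e T + w i e) - F e (wsum w e T)))"
    by (rule sum_perm_preceding[OF fin iX])
  also have "\<dots> = (\<Sum>T\<in>Pow (X - {i}). real (fact (card T) * fact (card X - 1 - card T)) *
           (G (insert i T) - G T))"
  proof (intro sum.cong refl)
    fix T assume T: "T \<in> Pow (X - {i})"
    have "finite T" using T fin finite_subset by auto
    moreover have "i \<notin> T" using T by auto
    ultimately have "wsum w e (insert i T) = wsum w e T + w i e" by (simp add: wsum_def)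
    then show "real (fact (card T) * fact (card X - 1 - card T)) * (F e (wsum w e T + w i e) - F e (wsum w e T))
      = real (fact (card T) * fact (card X - 1 - card T)) * (G (insert i T) - G T)"
      by (simp add: G_def)
  qed
  finally have num: "(\<Sum>ord\<in>permutations_of_set X.
        F e (wsum w e (preceding ord i) + w i e) - F e (wsum w e (preceding ord i))) = \<dots>" .
  show ?thesis
    unfolding shapley_def num G_def[symmetric] pot_diff[where G=G, OF fin iX G0] card_permutations_of_set[OF fin]
    by (simp add: sum_divide_distrib)
qed

lemma Pot_empty: "Pot G {} = 0" by (simp add: Pot_def cf_def)

lemma telescope:
  assumes "distinct ord"
  shows "(\<Sum>i\<in>set ord. Pot G (preceding ord i \<union> {i}) - Pot G (preceding ord i)) = Pot G (set ord)"
  using assms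
proof (induction ord rule: rev_induct)
  case Nil then show ?case by (simp add: Pot_empty)
next
  case (snoc x xs)
  have xn: "x \<notin> set xs" and dx: "distinct xs" using snoc.prems by auto
  have p1: "\<And>i. i \<in> set xs \<Longrightarrow> preceding (xs @ [x]) i = preceding xs i"
    by (simp add: preceding_def)
  have p2: "preceding (xs @ [x]) x = set xs"
    using xn tw_split[of x xs "[]"] by (simp add: preceding_def)
  have "(\<Sum>i\<in>set (xs @ [x]). Pot G (preceding (xs @ [x]) i \<union> {i}) - Pot G (preceding (xs @ [x]) i))
     = (Pot G (set xs \<union> {x}) - Pot G (set xs)) +
       (\<Sum>i\<in>set xs. Pot G (preceding (xs @ [x]) i \<union> {i}) - Pot G (preceding (xs @ [x]) i))"
    using xn by (simp add: p2)
  also have "(\<Sum>i\<in>set xs. Pot G (preceding (xs @ [x]) i \<union> {i}) - Pot G (preceding (xs @ [x]) i))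
     = (\<Sum>i\<in>set xs. Pot G (preceding xs i \<union> {i}) - Pot G (preceding xs i))"
    by (intro sum.cong refl) (simp add: p1)
  also have "\<dots> = Pot G (set xs)" using snoc.IH dx by simp
  finally show ?case by simp
qed

lemma tangent_powr:
  fixes a c x :: real
  assumes c: "0 < c" and x: "0 < x" and a: "1 \<le> a"
  shows "a * c powr (a - 1) * (x - c) \<le> x powr a - c powr a"
proof (cases x c rule: linorder_cases)
  case equal then show ?thesis by simp
next
  case greater
  have "\<exists>z. c < z \<and> z < x \<and> x powr a - c powr a = (x - c) * (a * z powr (a - 1))"
    by (rule MVT2[OF greater]) (use c in \<open>auto intro!: has_real_derivative_powr\<close>)
  then obtain z where z: "c < z" "z < x" "x powr a - c powr a = (x - c) * (a * z powr (a - 1))" by blast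
  have "c powr (a - 1) \<le> z powr (a - 1)" using z c a by (intro powr_mono2) auto
  then have "(x - c) * (a * c powr (a - 1)) \<le> (x - c) * (a * z powr (a - 1))"
    using greater a by (intro mult_left_mono) auto
  then show ?thesis using z by (simp add: algebra_simps)
next
  case less
  have "\<exists>z. x < z \<and> z < c \<and> c powr a - x powr a = (c - x) * (a * z powr (a - 1))"
    by (rule MVT2[OF less]) (use x in \<open>auto intro!: has_real_derivative_powr\<close>)
  then obtain z where z: "x < z" "z < c" "c powr a - x powr a = (c - x) * (a * z powr (a - 1))" by blast
  have "z powr (a - 1) \<le> c powr (a - 1)" using z x a by (intro powr_mono2) auto
  then have "(c - x) * (a * z powr (a - 1)) \<le> (c - x) * (a * c powr (a - 1))"
    using less a by (intro mult_left_mono) auto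
  then show ?thesis using z by (simp add: algebra_simps)
qed

lemma jensen_powr:
  fixes f :: "'a \<Rightarrow> real"
  assumes fin: "finite A" and ne: "A \<noteq> {}" and pos: "\<And>x. x \<in> A \<Longrightarrow> f x > 0" and a: "1 \<le> a"
  shows "real (card A) * ((\<Sum>x\<in>A. f x) / real (card A)) powr a \<le> (\<Sum>x\<in>A. f x powr a)"
proof -
  define m where "m = real (card A)"
  have m: "m > 0" unfolding m_def using fin ne by (simp add: card_gt_0_iff)
  define c where "c = (\<Sum>x\<in>A. f x) / m"
  have sp: "(\<Sum>x\<in>A. f x) > 0" using fin ne pos by (simp add: sum_pos)
  have c: "c > 0" unfolding c_def using m sp by simp
  have t: "\<And>x. x \<in> A \<Longrightarrow> c powr a + a * c powr (a - 1) * (f x - c) \<le> f x powr a"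
  proof -
    fix x assume "x \<in> A"
    from tangent_powr[OF c pos[OF this] a] show "c powr a + a * c powr (a - 1) * (f x - c) \<le> f x powr a"
      by linarith
  qed
  have s1: "(\<Sum>x\<in>A. c powr a + a * c powr (a - 1) * (f x - c)) \<le> (\<Sum>x\<in>A. f x powr a)"
    using t by (rule sum_mono)
  have s2: "(\<Sum>x\<in>A. c powr a + a * c powr (a - 1) * (f x - c))
     = m * c powr a + a * c powr (a - 1) * ((\<Sum>x\<in>A. f x) - m * c)"
    unfolding sum.distrib sum_distrib_left[symmetric] sum_subtractf by (simp add: m_def)
  have s3: "(\<Sum>x\<in>A. f x) - m * c = 0" using m unfolding c_def by simp
  from s1 s2 s3 have "m * c powr a \<le> (\<Sum>x\<in>A. f x powr a)" by simp
  then show ?thesis unfolding m_def c_def .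
qed

lemma powsum:
  fixes a :: real
  assumes a: "1 \<le> a"
  shows "real n powr a / a \<le> (\<Sum>t=1..n. real t powr (a - 1))"
proof (induction n)
  case 0 then show ?case by simp
next
  case (Suc n)
  have step: "real (Suc n) powr a - real n powr a \<le> a * real (Suc n) powr (a - 1)"
  proof (cases "n = 0")
    case True then show ?thesis using a by simp
  next
    case False
    have "a * real (Suc n) powr (a - 1) * (real n - real (Suc n)) \<le> real n powr a - real (Suc n) powr a"
      using False a by (intro tangent_powr) auto
    then show ?thesis by simp
  qed
  have "real (Suc n) powr a / a \<le> real n powr a / a + real (Suc n) powr (a - 1)"
    using step a by (simp add: field_simps)
  also have "\<dots> \<le> (\<Sum>t=1..n. real t powr (a - 1)) + real (Suc n) powr (a - 1)"
    using Suc.IH by simp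
  finally show ?case by simp
qed

lemma group_card:
  assumes fin: "finite X"
  shows "(\<Sum>T\<in>Pow X. h T) = (\<Sum>t=0..card X. \<Sum>T\<in>{T. T \<subseteq> X \<and> card T = t}. h T)"
proof -
  have "(\<Sum>t=0..card X. \<Sum>T\<in>{T. T \<in> Pow X \<and> card T = t}. h T) = (\<Sum>T\<in>Pow X. h T)"
    by (rule sum.group) (use fin in \<open>auto intro: card_mono\<close>)
  then show ?thesis by simp
qed

lemma harm_cf:
  assumes fin: "finite X"
  shows "(\<Sum>T\<in>Pow X. cf (card T) (card X)) = (\<Sum>t=1..card X. 1 / real t)"
proof -
  have "(\<Sum>T\<in>Pow X. cf (card T) (card X))
      = (\<Sum>t=0..card X. \<Sum>T\<in>{T. T \<subseteq> X \<and> card T = t}. cf t (card X))"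
    unfolding group_card[OF fin] by (intro sum.cong refl) auto
  also have "\<dots> = (\<Sum>t=0..card X. real (card X choose t) * cf t (card X))"
    using n_subsets[OF fin] by simp
  also have "\<dots> = (\<Sum>t=1..card X. real (card X choose t) * cf t (card X))"
    by (subst sum.atLeast_Suc_atMost) (auto simp: cf_def)
  also have "\<dots> = (\<Sum>t=1..card X. 1 / real t)"
  proof (intro sum.cong refl)
    fix t assume t: "t \<in> {1..card X}"
    then obtain s where s: "t = Suc s" by (cases t) auto
    have "real (card X choose t) * cf t (card X)
        = fact (card X) / (fact t * fact (card X - t)) * (fact s * fact (card X - t) / fact (card X))"
      using t s by (simp add: binomial_fact cf_def)
    also have "\<dots> = fact s / fact t" by (simp add: field_simps)
    also have "\<dots> = 1 / real t" using s by (simp add: field_simps del: of_nat_Suc)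
    finally show "real (card X choose t) * cf t (card X) = 1 / real t" .
  qed
  finally show ?thesis .
qed

lemma cf_nonneg: "cf t n \<ge> 0" by (simp add: cf_def)

lemma card_containing:
  assumes fin: "finite X" and iX: "i \<in> X" and t: "1 \<le> t"
  shows "card {T. T \<subseteq> X \<and> card T = t \<and> i \<in> T} = (card X - 1) choose (t - 1)"
proof -
  have eq: "{T. T \<subseteq> X \<and> card T = t \<and> i \<in> T} = insert i ` {U. U \<subseteq> X - {i} \<and> card U = t - 1}"
  proof (rule set_eqI, rule iffI)
    fix T assume T: "T \<in> {T. T \<subseteq> X \<and> card T = t \<and> i \<in> T}"
    have fT: "finite T" using T fin finite_subset by auto
    have "T - {i} \<in> {U. U \<subseteq> X - {i} \<and> card U = t - 1}" using T fT by auto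
    moreover have "T = insert i (T - {i})" using T by auto
    ultimately show "T \<in> insert i ` {U. U \<subseteq> X - {i} \<and> card U = t - 1}" by blast
  next
    fix T assume "T \<in> insert i ` {U. U \<subseteq> X - {i} \<and> card U = t - 1}"
    then obtain U where U: "T = insert i U" "U \<subseteq> X - {i}" "card U = t - 1" by blast
    have fU: "finite U" using U fin finite_subset by auto
    have "card T = t" using U fU t by (subst U(1), subst card_insert_disjoint) auto
    then show "T \<in> {T. T \<subseteq> X \<and> card T = t \<and> i \<in> T}" using U iX by auto
  qed
  have inj: "inj_on (insert i) {U. U \<subseteq> X - {i} \<and> card U = t - 1}"
    by (auto simp: inj_on_def)
  show ?thesis unfolding eq card_image[OF inj] using n_subsets[of "X - {i}" "t - 1"] fin iX by simp
qed

lemma sum_restrict_sub: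
  assumes "finite X" "T \<subseteq> X"
  shows "sum v T = (\<Sum>i\<in>X. if i \<in> T then v i else (0::real))"
proof -
  have "(\<Sum>i\<in>X. if i \<in> T then v i else (0::real)) = sum v (X \<inter> T)"
    using assms(1) by (rule sum.inter_restrict[symmetric])
  also have "X \<inter> T = T" using assms(2) by blast
  finally show ?thesis by simp
qed

lemma double_count:
  fixes v :: "nat \<Rightarrow> real"
  assumes fin: "finite X" and t: "1 \<le> t"
  shows "(\<Sum>T\<in>{T. T \<subseteq> X \<and> card T = t}. \<Sum>i\<in>T. v i) = real ((card X - 1) choose (t - 1)) * (\<Sum>i\<in>X. v i)"
proof -
  let ?S = "{T. T \<subseteq> X \<and> card T = t}"
  have fS: "finite ?S" using fin by simp
  have "(\<Sum>T\<in>?S. \<Sum>i\<in>T. v i) = (\<Sum>T\<in>?S. \<Sum>i\<in>X. if i \<in> T then v i else 0)"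
    by (intro sum.cong refl sum_restrict_sub fin) auto
  also have "\<dots> = (\<Sum>i\<in>X. \<Sum>T\<in>?S. if i \<in> T then v i else 0)" by (rule sum.swap)
  also have "\<dots> = (\<Sum>i\<in>X. real (card {T. T \<subseteq> X \<and> card T = t \<and> i \<in> T}) * v i)"
  proof (intro sum.cong refl)
    fix i assume "i \<in> X"
    have "(\<Sum>T\<in>?S. if i \<in> T then v i else 0) = (\<Sum>T\<in>?S \<inter> {T. i \<in> T}. v i)"
      using sum.inter_restrict[OF fS, of "\<lambda>_. v i" "{T. i \<in> T}"] by simp
    also have "?S \<inter> {T. i \<in> T} = {T. T \<subseteq> X \<and> card T = t \<and> i \<in> T}" by auto
    finally show "(\<Sum>T\<in>?S. if i \<in> T then v i else 0) = real (card {T. T \<subseteq> X \<and> card T = t \<and> i \<in> T}) * v i"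
      by simp
  qed
  also have "\<dots> = (\<Sum>i\<in>X. real ((card X - 1) choose (t - 1)) * v i)"
    by (intro sum.cong refl) (simp add: card_containing[OF fin _ t])
  finally show ?thesis by (simp add: sum_distrib_left)
qed

lemma gnd_nonneg:
  assumes "sigma e \<ge> 0" "\<And>j. j < q \<Longrightarrow> xi e j \<ge> 0"
  shows "gnd_cost sigma xi alpha q e l \<ge> 0"
  using assms by (auto simp: gnd_cost_def intro!: add_nonneg_nonneg sum_nonneg mult_nonneg_nonneg)

lemma gnd_mono:
  assumes "sigma e \<ge> 0" "\<And>j. j < q \<Longrightarrow> xi e j \<ge> 0" "\<And>j. j < q \<Longrightarrow> alpha j \<ge> 0" "l \<le> l'"
  shows "gnd_cost sigma xi alpha q e l \<le> gnd_cost sigma xi alpha q e l'"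
proof (cases "l = 0")
  case True then show ?thesis using gnd_nonneg[of sigma e q xi alpha l'] assms by (simp add: gnd_cost_def)
next
  case False
  then have "l' \<noteq> 0" using assms(4) by auto
  moreover have "(\<Sum>j<q. xi e j * real l powr alpha j) \<le> (\<Sum>j<q. xi e j * real l' powr alpha j)"
    using assms by (intro sum_mono mult_left_mono powr_mono2) auto
  ultimately show ?thesis using False by (simp add: gnd_cost_def)
qed

lemma Pot_upper:
  assumes fin: "finite X" and mono: "\<And>T. T \<subseteq> X \<Longrightarrow> G T \<le> G X"
  shows "Pot G X \<le> (\<Sum>t=1..card X. 1 / real t) * G X"
proof -
  have "Pot G X \<le> (\<Sum>T\<in>Pow X. cf (card T) (card X) * G X)"
    unfolding Pot_def by (intro sum_mono mult_left_mono cf_nonneg mono) auto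
  also have "\<dots> = (\<Sum>T\<in>Pow X. cf (card T) (card X)) * G X" by (simp add: sum_distrib_right)
  finally show ?thesis unfolding harm_cf[OF fin] .
qed

lemma harm_ge1: "1 \<le> n \<Longrightarrow> 1 \<le> (\<Sum>t=1..n. 1 / real t)"
proof (induction n)
  case 0 then show ?case by simp
next
  case (Suc n) then show ?case
    by (cases "n = 0") (auto simp: add_increasing2)
qed

lemma pow_term:
  fixes W :: real
  assumes "W > 0" "n > 0" "t > 0"
  shows "(real t * W / real n) powr a / real t = (W / real n) powr a * real t powr (a - 1)"
proof -
  have "(real t * W / real n) powr a = real t powr a * (W / real n) powr a"
    using assms by (simp add: powr_mult[symmetric])
  moreover have "real t powr (a - 1) = real t powr a / real t"
    using assms by (simp add: powr_diff)
  ultimately show ?thesis by simp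
qed

lemma choose_cf:
  assumes "1 \<le> t" "t \<le> n"
  shows "real (n choose t) * cf t n = 1 / real t"
proof -
  obtain s where s: "t = Suc s" using assms by (cases t) auto
  have "real (n choose t) * cf t n
      = fact n / (fact t * fact (n - t)) * (fact s * fact (n - t) / fact n)"
    using assms s by (simp add: binomial_fact cf_def)
  also have "\<dots> = fact s / fact t" by (simp add: field_simps)
  also have "\<dots> = 1 / real t" using s by (simp add: field_simps del: of_nat_Suc)
  finally show ?thesis .
qed

lemma wsum_real: "real (wsum w e T) = (\<Sum>i\<in>T. real (w i e))"
  by (simp add: wsum_def)

lemma Pot_lower:
  assumes fin: "finite X" and ne: "X \<noteq> {}" and w1: "\<And>i. i \<in> X \<Longrightarrow> w i e \<ge> 1"
    and sg: "sigma e \<ge> 0" and xg: "\<And>j. j < q \<Longrightarrow> xi e j \<ge> 0" and ag: "\<And>j. j < q \<Longrightarrow> alpha j \<ge> 1"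
  shows "sigma e + (\<Sum>j<q. xi e j * real (wsum w e X) powr alpha j / alpha j)
     \<le> Pot (\<lambda>T. gnd_cost sigma xi alpha q e (wsum w e T)) X"
proof -
  define G where "G = (\<lambda>T. gnd_cost sigma xi alpha q e (wsum w e T))"
  define n where "n = card X"
  define W where "W = real (wsum w e X)"
  define S where "S = (\<lambda>t. {T. T \<subseteq> X \<and> card T = t})"
  have n: "n \<ge> 1" using fin ne n_def by (simp add: Suc_le_eq card_gt_0_iff)
  have wsT: "\<And>T. T \<subseteq> X \<Longrightarrow> T \<noteq> {} \<Longrightarrow> wsum w e T \<ge> 1"
  proof -
    fix T assume T: "T \<subseteq> X" "T \<noteq> {}"
    then obtain i where i: "i \<in> T" by auto
    have "finite T" using T fin finite_subset by auto
    then have "w i e \<le> wsum w e T" unfolding wsum_def using i by (intro member_le_sum) auto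
    then show "wsum w e T \<ge> 1" using w1[of i] i T by auto
  qed
  have W: "W > 0" using wsT[OF order_refl ne] W_def by simp
  have GT: "\<And>T. T \<subseteq> X \<Longrightarrow> T \<noteq> {} \<Longrightarrow> G T = sigma e + (\<Sum>j<q. xi e j * real (wsum w e T) powr alpha j)"
  proof -
    fix T assume T: "T \<subseteq> X" "T \<noteq> {}"
    have "1 \<le> wsum w e T" by (rule wsT[OF T])
    then have "wsum w e T \<noteq> 0" by simp
    then show "G T = sigma e + (\<Sum>j<q. xi e j * real (wsum w e T) powr alpha j)" by (simp add: G_def gnd_cost_def)
  qed
  have P: "Pot G X = (\<Sum>t=1..n. cf t n * (\<Sum>T\<in>S t. G T))"
  proof -
    have "Pot G X = (\<Sum>t=0..n. \<Sum>T\<in>S t. cf (card T) n * G T)"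
      unfolding Pot_def group_card[OF fin] n_def S_def ..
    also have "\<dots> = (\<Sum>t=0..n. cf t n * (\<Sum>T\<in>S t. G T))"
      unfolding sum_distrib_left by (intro sum.cong refl) (auto simp: S_def)
    also have "\<dots> = (\<Sum>t=1..n. cf t n * (\<Sum>T\<in>S t. G T))"
      by (subst sum.atLeast_Suc_atMost) (auto simp: cf_def)
    finally show ?thesis .
  qed
  have tm: "1 / real t * (sigma e + (\<Sum>j<q. xi e j * (real t * W / real n) powr alpha j))
      \<le> cf t n * (\<Sum>T\<in>S t. G T)" if t: "t \<in> {1..n}" for t
  proof -
    define C where "C = real (n choose t)"
    have fS: "finite (S t)" using fin by (simp add: S_def)
    have cS: "card (S t) = n choose t" using n_subsets[OF fin] by (simp add: S_def n_def)
    have C: "C > 0" using t by (simp add: C_def)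
    have neS: "S t \<noteq> {}" using cS C C_def by auto
    have Tne: "\<And>T. T \<in> S t \<Longrightarrow> T \<subseteq> X \<and> T \<noteq> {}" using t by (auto simp: S_def)
    have sumG: "(\<Sum>T\<in>S t. G T) = C * sigma e + (\<Sum>j<q. xi e j * (\<Sum>T\<in>S t. real (wsum w e T) powr alpha j))"
    proof -
      have "(\<Sum>T\<in>S t. G T) = (\<Sum>T\<in>S t. sigma e + (\<Sum>j<q. xi e j * real (wsum w e T) powr alpha j))"
        using Tne GT by (intro sum.cong refl) auto
      also have "\<dots> = (\<Sum>T\<in>S t. sigma e) + (\<Sum>T\<in>S t. \<Sum>j<q. xi e j * real (wsum w e T) powr alpha j)"
        by (rule sum.distrib)
      also have "(\<Sum>T\<in>S t. \<Sum>j<q. xi e j * real (wsum w e T) powr alpha j) = (\<Sum>j<q. \<Sum>T\<in>S t. xi e j * real (wsum w e T) powr alpha j)"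
        by (rule sum.swap)
      also have "(\<Sum>T\<in>S t. sigma e) = C * sigma e" using cS C_def by simp
      also have "(\<Sum>j<q. \<Sum>T\<in>S t. xi e j * real (wsum w e T) powr alpha j) = (\<Sum>j<q. xi e j * (\<Sum>T\<in>S t. real (wsum w e T) powr alpha j))"
        by (simp only: sum_distrib_left)
      finally show ?thesis .
    qed
    have avg: "(\<Sum>T\<in>S t. real (wsum w e T)) / C = real t * W / real n"
    proof -
      have "(\<Sum>T\<in>S t. real (wsum w e T)) = real ((n - 1) choose (t - 1)) * W"
        unfolding wsum_real W_def S_def n_def using t by (intro double_count fin) auto
      moreover have "real t * C = real n * real ((n - 1) choose (t - 1))"
        using times_binomial_minus1_eq[of t n] t unfolding C_def by (simp flip: of_nat_mult)
      ultimately show ?thesis using C n by (simp add: field_simps)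
    qed
    have jen: "C * (real t * W / real n) powr alpha j \<le> (\<Sum>T\<in>S t. real (wsum w e T) powr alpha j)"
      if j: "j < q" for j
    proof -
      have "real (card (S t)) * ((\<Sum>T\<in>S t. real (wsum w e T)) / real (card (S t))) powr alpha j
          \<le> (\<Sum>T\<in>S t. real (wsum w e T) powr alpha j)"
        using fS neS ag[OF j] by (intro jensen_powr) (auto dest!: Tne wsT)
      then show ?thesis using avg cS C_def by simp
    qed
    have "C * (sigma e + (\<Sum>j<q. xi e j * (real t * W / real n) powr alpha j)) \<le> (\<Sum>T\<in>S t. G T)"
    proof -
      have "C * (sigma e + (\<Sum>j<q. xi e j * (real t * W / real n) powr alpha j))
          = C * sigma e + (\<Sum>j<q. xi e j * (C * (real t * W / real n) powr alpha j))"
        by (simp add: distrib_left sum_distrib_left mult.left_commute)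
      also have "(\<Sum>j<q. xi e j * (C * (real t * W / real n) powr alpha j))
          \<le> (\<Sum>j<q. xi e j * (\<Sum>T\<in>S t. real (wsum w e T) powr alpha j))"
        by (intro sum_mono mult_left_mono jen xg) auto
      finally show ?thesis unfolding sumG by simp
    qed
    then have "cf t n * (C * (sigma e + (\<Sum>j<q. xi e j * (real t * W / real n) powr alpha j))) \<le> cf t n * (\<Sum>T\<in>S t. G T)"
      by (intro mult_left_mono cf_nonneg)
    moreover have "cf t n * C = 1 / real t" using choose_cf[of t n] t C_def by (simp add: mult.commute)
    ultimately show ?thesis by (simp add: mult.assoc[symmetric])
  qed
  have "(\<Sum>t=1..n. 1 / real t * (sigma e + (\<Sum>j<q. xi e j * (real t * W / real n) powr alpha j)))
      = sigma e * (\<Sum>t=1..n. 1 / real t) + (\<Sum>j<q. xi e j * ((W / real n) powr alpha j * (\<Sum>t=1..n. real t powr (alpha j - 1))))"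
  proof -
    have "(\<Sum>t=1..n. 1 / real t * (sigma e + (\<Sum>j<q. xi e j * (real t * W / real n) powr alpha j)))
      = sigma e * (\<Sum>t=1..n. 1 / real t) + (\<Sum>j<q. xi e j * (\<Sum>t=1..n. (real t * W / real n) powr alpha j / real t))"
    proof -
      have "(\<Sum>t=1..n. 1 / real t * (sigma e + (\<Sum>j<q. xi e j * (real t * W / real n) powr alpha j)))
          = (\<Sum>t=1..n. sigma e * (1 / real t) + (\<Sum>j<q. xi e j * ((real t * W / real n) powr alpha j / real t)))"
      proof (intro sum.cong refl)
        fix t
        have "1 / real t * (sigma e + (\<Sum>j<q. xi e j * (real t * W / real n) powr alpha j))
           = sigma e * (1 / real t) + (\<Sum>j<q. xi e j * (real t * W / real n) powr alpha j) / real t"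
          by (simp add: distrib_left)
        also have "(\<Sum>j<q. xi e j * (real t * W / real n) powr alpha j) / real t
           = (\<Sum>j<q. xi e j * ((real t * W / real n) powr alpha j / real t))"
          by (simp add: sum_divide_distrib)
        finally show "1 / real t * (sigma e + (\<Sum>j<q. xi e j * (real t * W / real n) powr alpha j))
           = sigma e * (1 / real t) + (\<Sum>j<q. xi e j * ((real t * W / real n) powr alpha j / real t))" .
      qed
      also have "\<dots> = (\<Sum>t=1..n. sigma e * (1 / real t)) + (\<Sum>t=1..n. \<Sum>j<q. xi e j * ((real t * W / real n) powr alpha j / real t))"
        by (rule sum.distrib)
      also have "(\<Sum>t=1..n. \<Sum>j<q. xi e j * ((real t * W / real n) powr alpha j / real t))
          = (\<Sum>j<q. \<Sum>t=1..n. xi e j * ((real t * W / real n) powr alpha j / real t))"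
        by (rule sum.swap)
      finally show ?thesis by (simp only: sum_distrib_left)
    qed
    also have "(\<Sum>j<q. xi e j * (\<Sum>t=1..n. (real t * W / real n) powr alpha j / real t))
       = (\<Sum>j<q. xi e j * ((W / real n) powr alpha j * (\<Sum>t=1..n. real t powr (alpha j - 1))))"
    proof (intro sum.cong refl arg_cong2[where f="(*)"])
      fix j
      have "(\<Sum>t=1..n. (real t * W / real n) powr alpha j / real t) = (\<Sum>t=1..n. (W / real n) powr alpha j * real t powr (alpha j - 1))"
        using W n by (intro sum.cong refl pow_term) auto
      then show "(\<Sum>t=1..n. (real t * W / real n) powr alpha j / real t) = (W / real n) powr alpha j * (\<Sum>t=1..n. real t powr (alpha j - 1))"
        by (simp only: sum_distrib_left)
    qed
    finally show ?thesis .
  qed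
  moreover have "(\<Sum>t=1..n. 1 / real t * (sigma e + (\<Sum>j<q. xi e j * (real t * W / real n) powr alpha j)))
      \<le> Pot G X" unfolding P by (intro sum_mono tm)
  moreover have "sigma e \<le> sigma e * (\<Sum>t=1..n. 1 / real t)"
    using harm_ge1[OF n] sg by (simp add: mult_le_cancel_left1)
  moreover have "(\<Sum>j<q. xi e j * W powr alpha j / alpha j)
      \<le> (\<Sum>j<q. xi e j * ((W / real n) powr alpha j * (\<Sum>t=1..n. real t powr (alpha j - 1))))"
  proof (intro sum_mono)
    fix j assume "j \<in> {..<q}"
    then have j: "j < q" by simp
    have eq: "W powr alpha j / alpha j = (W / real n) powr alpha j * (real n powr alpha j / alpha j)"
      using n W by (simp add: powr_divide)
    have le2: "(W / real n) powr alpha j * (real n powr alpha j / alpha j) \<le> (W / real n) powr alpha j * (\<Sum>t=1..n. real t powr (alpha j - 1))"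
      using powsum[OF ag[OF j], of n] by (intro mult_left_mono) auto
    have le: "W powr alpha j / alpha j \<le> (W / real n) powr alpha j * (\<Sum>t=1..n. real t powr (alpha j - 1))"
      by (subst eq) (rule le2)
    show "xi e j * W powr alpha j / alpha j
      \<le> xi e j * ((W / real n) powr alpha j * (\<Sum>t=1..n. real t powr (alpha j - 1)))"
      using mult_left_mono[OF le xg[OF j]] by simp
  qed
  ultimately show ?thesis unfolding G_def[symmetric] W_def[symmetric] by linarith
qed

lemma potential_resource:
  assumes ps: "psi e \<in> permutations_of_set U"
  shows "(\<Sum>i\<in>U. shapley (gnd_cost sigma xi alpha q) w e (preceding (psi e) i \<union> {i}) i)
       = Pot (\<lambda>T. gnd_cost sigma xi alpha q e (wsum w e T)) U"
proof -
  let ?G = "\<lambda>T. gnd_cost sigma xi alpha q e (wsum w e T)"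
  have sU: "set (psi e) = U" and d: "distinct (psi e)" using ps by (auto simp: permutations_of_set_def)
  have F0: "gnd_cost sigma xi alpha q e 0 = 0" by (simp add: gnd_cost_def)
  have "(\<Sum>i\<in>U. shapley (gnd_cost sigma xi alpha q) w e (preceding (psi e) i \<union> {i}) i)
      = (\<Sum>i\<in>set (psi e). Pot ?G (preceding (psi e) i \<union> {i}) - Pot ?G (preceding (psi e) i))"
    unfolding sU[symmetric]
  proof (intro sum.cong refl)
    fix i assume "i \<in> set (psi e)"
    have fin: "finite (preceding (psi e) i \<union> {i})" by (simp add: preceding_def)
    have "preceding (psi e) i \<union> {i} - {i} = preceding (psi e) i" using i_notin_preceding[of i "psi e"] by auto
    then show "shapley (gnd_cost sigma xi alpha q) w e (preceding (psi e) i \<union> {i}) i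
      = Pot ?G (preceding (psi e) i \<union> {i}) - Pot ?G (preceding (psi e) i)"
      using shapley_pot[where F="gnd_cost sigma xi alpha q" and e=e and i=i and w=w, OF fin _ F0] by simp
  qed
  also have "\<dots> = Pot ?G (set (psi e))" by (rule telescope[OF d])
  finally show ?thesis using sU by simp
qed

theorem theorem7p2:
  fixes E :: "'e set" and N :: nat and P :: "nat \<Rightarrow> 'e set set"
    and w :: "nat \<Rightarrow> 'e \<Rightarrow> nat" and q :: nat and alpha :: "nat \<Rightarrow> real"
    and sigma :: "'e \<Rightarrow> real" and xi :: "'e \<Rightarrow> nat \<Rightarrow> real"
    and p :: "nat \<Rightarrow> 'e set" and psi :: "'e \<Rightarrow> nat list"
  assumes "finite E"
    and "\<And>i. i < N \<Longrightarrow> P i \<subseteq> Pow E"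
    and "\<And>i e. i < N \<Longrightarrow> e \<in> E \<Longrightarrow> w i e \<ge> 1"
    and "q \<ge> 1"
    and "\<And>j. j < q \<Longrightarrow> alpha j > 1"
    and "\<And>e. e \<in> E \<Longrightarrow> sigma e \<ge> 0"
    and "\<And>e j. e \<in> E \<Longrightarrow> j < q \<Longrightarrow> xi e j \<ge> 0"
    and "\<And>e. e \<in> E \<Longrightarrow> \<exists>j<q. xi e j > 0"
    and "\<And>i. i < N \<Longrightarrow> p i \<in> P i"
    and "\<And>e. e \<in> (\<Union>i<N. p i) \<Longrightarrow> psi e \<in> permutations_of_set (users N p e)"
  shows "1 / real_of_int \<lceil>Max (alpha ` {..<q})\<rceil> * total_cost N E (gnd_cost sigma xi alpha q) w p
           \<le> potential N (gnd_cost sigma xi alpha q) w p psi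
       \<and> potential N (gnd_cost sigma xi alpha q) w p psi
           \<le> (\<Sum>k=1..N. 1 / real k) * total_cost N E (gnd_cost sigma xi alpha q) w p"
proof -
  note finE = assms(1) and w1 = assms(3) and q1 = assms(4) and ag = assms(5) and sg = assms(6)
    and xg = assms(7) and psiA = assms(10)
  define Fc where "Fc = gnd_cost sigma xi alpha q"
  define R where "R = (\<Union>i<N. p i)"
  define D where "D = real_of_int \<lceil>Max (alpha ` {..<q})\<rceil>"
  define H where "H = (\<Sum>k=1..N. 1 / real k)"
  define Ge where "Ge = (\<lambda>e T. Fc e (wsum w e T))"
  have RE: "R \<subseteq> E" using assms(2) assms(9) unfolding R_def by blast
  have finR: "finite R" using RE finE finite_subset by blast
  have fU: "\<And>e. finite (users N p e)" by (simp add: users_def)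
  have UN: "\<And>e. users N p e \<subseteq> {..<N}" by (auto simp: users_def)
  have TC: "total_cost N E Fc w p = (\<Sum>e\<in>R. Ge e (users N p e))"
  proof -
    have "total_cost N E Fc w p = (\<Sum>e\<in>R. Fc e (load N w p e))"
      unfolding total_cost_def
    proof (rule sum.mono_neutral_right[OF finE RE])
      show "\<forall>e\<in>E - R. Fc e (load N w p e) = 0"
      proof
        fix e assume "e \<in> E - R"
        then have "users N p e = {}" by (auto simp: users_def R_def)
        then show "Fc e (load N w p e) = 0" by (simp add: load_def wsum_def Fc_def gnd_cost_def)
      qed
    qed
    then show ?thesis by (simp add: Ge_def load_def)
  qed
  have POT: "potential N Fc w p psi = (\<Sum>e\<in>R. Pot (Ge e) (users N p e))"
    unfolding potential_def R_def[symmetric]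
  proof (intro sum.cong refl)
    fix e assume "e \<in> R"
    then have "psi e \<in> permutations_of_set (users N p e)" using psiA R_def by simp
    then show "(\<Sum>i\<in>users N p e. shapley Fc w e (preceding (psi e) i \<union> {i}) i) = Pot (Ge e) (users N p e)"
      unfolding Ge_def Fc_def by (rule potential_resource)
  qed
  have Dge: "\<And>j. j < q \<Longrightarrow> alpha j \<le> D"
  proof -
    fix j assume "j < q"
    then have "alpha j \<le> Max (alpha ` {..<q})" by (intro Max_ge) auto
    then show "alpha j \<le> D" unfolding D_def by (meson le_of_int_ceiling order_trans)
  qed
  have D1: "1 \<le> D" using Dge[of 0] ag[of 0] q1 by simp
  have upper: "Pot (Ge e) (users N p e) \<le> H * Ge e (users N p e)" if e: "e \<in> R" for e
  proof -
    have eE: "e \<in> E" using e RE by auto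
    have mono: "\<And>T. T \<subseteq> users N p e \<Longrightarrow> Ge e T \<le> Ge e (users N p e)"
    proof -
      fix T assume "T \<subseteq> users N p e"
      then have "wsum w e T \<le> wsum w e (users N p e)" unfolding wsum_def using fU by (intro sum_mono2) auto
      then show "Ge e T \<le> Ge e (users N p e)" unfolding Ge_def Fc_def
        using sg[OF eE] xg[OF eE] by (intro gnd_mono) (auto dest: ag)
    qed
    have "Pot (Ge e) (users N p e) \<le> (\<Sum>t=1..card (users N p e). 1 / real t) * Ge e (users N p e)"
      by (rule Pot_upper[where G="Ge e", OF fU mono])
    also have "\<dots> \<le> H * Ge e (users N p e)"
    proof (rule mult_right_mono)
      have "card (users N p e) \<le> N" using card_mono[OF _ UN, of e] by simp
      then show "(\<Sum>t=1..card (users N p e). 1 / real t) \<le> H" unfolding H_def by (intro sum_mono2) auto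
      show "0 \<le> Ge e (users N p e)" unfolding Ge_def Fc_def using sg[OF eE] xg[OF eE] by (rule gnd_nonneg)
    qed
    finally show ?thesis .
  qed
  have lower: "1 / D * Ge e (users N p e) \<le> Pot (Ge e) (users N p e)" if e: "e \<in> R" for e
  proof -
    have eE: "e \<in> E" using e RE by auto
    obtain i0 where i0: "i0 < N" "e \<in> p i0" using e R_def by auto
    have i0U: "i0 \<in> users N p e" using i0 by (simp add: users_def)
    have ne: "users N p e \<noteq> {}" using i0U by auto
    have wU: "\<And>i. i \<in> users N p e \<Longrightarrow> w i e \<ge> 1" using w1 eE by (auto simp: users_def)
    define W where "W = real (wsum w e (users N p e))"
    have "w i0 e \<le> wsum w e (users N p e)" unfolding wsum_def using fU i0U by (intro member_le_sum) auto
    then have Wnz: "wsum w e (users N p e) \<noteq> 0" using wU[OF i0U] by auto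
    have GU: "Ge e (users N p e) = sigma e + (\<Sum>j<q. xi e j * W powr alpha j)"
      using Wnz by (simp add: Ge_def Fc_def gnd_cost_def W_def)
    have L: "sigma e + (\<Sum>j<q. xi e j * W powr alpha j / alpha j) \<le> Pot (Ge e) (users N p e)"
      unfolding W_def Ge_def Fc_def
      by (rule Pot_lower[where e=e and w=w and sigma=sigma and xi=xi and q=q and alpha=alpha and X="users N p e", OF fU ne wU sg[OF eE] xg[OF eE]]) (use ag in \<open>auto simp: less_imp_le\<close>)
    have "1 / D * Ge e (users N p e) = sigma e / D + (\<Sum>j<q. xi e j * W powr alpha j / D)"
      unfolding GU by (simp add: distrib_left sum_distrib_left mult.commute)
    also have "\<dots> \<le> sigma e + (\<Sum>j<q. xi e j * W powr alpha j / alpha j)"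
    proof (rule add_mono)
      show "sigma e / D \<le> sigma e" using D1 sg[OF eE] by (simp add: divide_le_eq mult_le_cancel_left1 order_trans[OF _ mult_right_mono])
      show "(\<Sum>j<q. xi e j * W powr alpha j / D) \<le> (\<Sum>j<q. xi e j * W powr alpha j / alpha j)"
      proof (rule sum_mono)
        fix j assume "j \<in> {..<q}"
        then have j: "j < q" by simp
        have "0 \<le> xi e j * W powr alpha j" using xg[OF eE j] by simp
        moreover have "0 < alpha j" using ag[OF j] by simp
        ultimately show "xi e j * W powr alpha j / D \<le> xi e j * W powr alpha j / alpha j"
          using Dge[OF j] by (intro divide_left_mono) auto
      qed
    qed
    finally show ?thesis using L by simp
  qed
  have "1 / D * total_cost N E Fc w p \<le> potential N Fc w p psi"
    unfolding TC POT sum_distrib_left by (intro sum_mono lower)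
  moreover have "potential N Fc w p psi \<le> H * total_cost N E Fc w p"
    unfolding TC POT sum_distrib_left by (intro sum_mono upper)
  ultimately show ?thesis unfolding D_def H_def Fc_def by simp
qed

end
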